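(* For any valid $(\eta,\gamma)$, when WSU-UX is run with $K=2$ on the two-phase loss sequence, almost surely $$\sum_{t=1}^T\sum_{j\in[K]}\pi_{t,j}\hat\ell_{t,j}-\sum_{t=1}^T\hat\ell_{t,1}\ \ge\ \frac{\ln\pi_{T+1,1}+\ln K}{\eta}+\frac{\eta}{4}\sum_{t=1}^T\Bigl(\hat\ell_{t,1}-\sum_{j\in[K]}\pi_{t,j}\hat\ell_{t,j}\Bigr)^2.$$
   Context: WSU-UX. Fix integers $K\ge 2$ and $T\ge 1$ and hyperparameters $\eta,\gamma$. The pair $(\eta,\gamma)$ is called valid if $\eta,\gamma\in(0,1/2)$ and $\eta K/\gamma\le 1/2$. Given a fixed loss sequence $\ell_t\in[0,1]^K$, WSU-UX sets $\pi_{1,i}=1/K$ and in each round $t$: forms $\tilde\pi_{t,i}=(1-\gamma)\pi_{t,i}+\gamma/K$; draws $I_t$ with $\Pr(I_t=i\mid\mathcal F_{t-1})=\tilde\pi_{t,i}$; sets $\hat\ell_{t,i}=\ell_{t,i}\mathbf 1[I_t=i]/\tilde\pi_{t,i}$; and updates $\pi_{t+1,i}=\pi_{t,i}\bigl(1-\eta(\hat\ell_{t,i}-\sum_{j}\pi_{t,j}\hat\ell_{t,j})\bigr)$; $\mathcal F_t$ is the history generated by $I_1,\dots,I_t$. Two-phase loss sequence ($K=2$, $T$ a multiple of $100$, $T_1=T/100$): $\ell_{t,1}=1,\ell_{t,2}=0$ for $1\le t\le T_1$ and $\ell_{t,1}=0,\ell_{t,2}=1$ for $T_1<t\le T$. 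*)

theory Defs
  imports "HOL-Probability.Probability"
begin

text \<open>WSU-UX with K arms indexed 1..K, rounds indexed 1..T.
  Losses: l t i.  The arm choices are given as a function I :: nat => nat
  (I t = arm chosen in round t, t >= 1).\<close>

definition wsu_tilde :: "nat \<Rightarrow> real \<Rightarrow> (nat \<Rightarrow> real) \<Rightarrow> nat \<Rightarrow> real" where
  "wsu_tilde K \<gamma> p i = (1 - \<gamma>) * p i + \<gamma> / real K"

definition lhat_of :: "nat \<Rightarrow> real \<Rightarrow> (nat \<Rightarrow> nat \<Rightarrow> real) \<Rightarrow> (nat \<Rightarrow> real) \<Rightarrow> nat \<Rightarrow> nat \<Rightarrow> nat \<Rightarrow> real" where
  "lhat_of K \<gamma> l p t It i = l t i * (if It = i then 1 else 0) / wsu_tilde K \<gamma> p i"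

text \<open>wsu_pi K eta gamma l I t i = pi_{t,i} for t >= 1 (index 0 is a dummy).\<close>
primrec wsu_pi :: "nat \<Rightarrow> real \<Rightarrow> real \<Rightarrow> (nat \<Rightarrow> nat \<Rightarrow> real) \<Rightarrow> (nat \<Rightarrow> nat) \<Rightarrow> nat \<Rightarrow> nat \<Rightarrow> real" where
  "wsu_pi K \<eta> \<gamma> l I 0 i = 1 / real K"
| "wsu_pi K \<eta> \<gamma> l I (Suc t) i =
     (if t = 0 then 1 / real K
      else wsu_pi K \<eta> \<gamma> l I t i *
        (1 - \<eta> * (lhat_of K \<gamma> l (wsu_pi K \<eta> \<gamma> l I t) t (I t) i
                 - (\<Sum>j\<in>{1..K}. wsu_pi K \<eta> \<gamma> l I t j * lhat_of K \<gamma> l (wsu_pi K \<eta> \<gamma> l I t) t (I t) j))))"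

definition wsu_lhat :: "nat \<Rightarrow> real \<Rightarrow> real \<Rightarrow> (nat \<Rightarrow> nat \<Rightarrow> real) \<Rightarrow> (nat \<Rightarrow> nat) \<Rightarrow> nat \<Rightarrow> nat \<Rightarrow> real" where
  "wsu_lhat K \<eta> \<gamma> l I t i = lhat_of K \<gamma> l (wsu_pi K \<eta> \<gamma> l I t) t (I t) i"

text \<open>A history [I_1,...,I_t] as a function of the round index.\<close>
definition hist_fun :: "nat list \<Rightarrow> nat \<Rightarrow> nat" where
  "hist_fun h t = h ! (t - 1)"

text \<open>Law of the history (I_1,...,I_t): I_{t+1} given the past is drawn
  with probabilities tilde pi_{t+1,i}, i = 1..K.\<close>
primrec wsu_hist :: "nat \<Rightarrow> real \<Rightarrow> real \<Rightarrow> (nat \<Rightarrow> nat \<Rightarrow> real) \<Rightarrow> nat \<Rightarrow> nat list pmf" where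
  "wsu_hist K \<eta> \<gamma> l 0 = return_pmf []"
| "wsu_hist K \<eta> \<gamma> l (Suc t) =
     wsu_hist K \<eta> \<gamma> l t \<bind> (\<lambda>h. map_pmf (\<lambda>i. h @ [i])
        (pmf_of_list (map (\<lambda>i. (i, wsu_tilde K \<gamma> (wsu_pi K \<eta> \<gamma> l (hist_fun h) (Suc t)) i)) [1..<K+1])))"

definition valid_params :: "nat \<Rightarrow> real \<Rightarrow> real \<Rightarrow> bool" where
  "valid_params K \<eta> \<gamma> \<longleftrightarrow> 0 < \<eta> \<and> \<eta> < 1/2 \<and> 0 < \<gamma> \<and> \<gamma> < 1/2 \<and> \<eta> * real K / \<gamma> \<le> 1/2"

definition two_phase_loss :: "nat \<Rightarrow> nat \<Rightarrow> nat \<Rightarrow> real" where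
  "two_phase_loss T t i =
     (if t \<le> T div 100 then (if i = 1 then 1 else 0) else (if i = 2 then 1 else 0))"

end

theory Submission imports Defs begin
lemma ln_bound_aux:
  fixes y :: real assumes "\<bar>y\<bar> \<le> 1/2"
  shows "ln (1 - y) \<le> - y - y^2/4"
proof -
  define f where "f = (\<lambda>x::real. - x - x^2/4 - ln (1 - x))"
  have d: "DERIV f x :> x*(1+x)/(2*(1-x))" if "\<bar>x\<bar> \<le> 1/2" for x
  proof -
    have "DERIV f x :> -1 - 2*x/4 - (-1)/(1-x)"
      unfolding f_def using that
      by (auto intro!: derivative_eq_intros)
    moreover have "-1 - 2*x/4 - (-1)/(1-x) = x*(1+x)/(2*(1-x))"
      using that by (simp add: field_simps)
    ultimately show ?thesis by simp
  qed
  have "f 0 \<le> f y"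
  proof (cases "y \<ge> 0")
    case True
    show ?thesis
    proof (rule DERIV_nonneg_imp_nondecreasing[OF True])
      fix x assume "0 \<le> x" "x \<le> y"
      with assms have "\<bar>x\<bar> \<le> 1/2" by auto
      with d[OF this] \<open>0 \<le> x\<close> show "\<exists>z. DERIV f x :> z \<and> 0 \<le> z"
        by (intro exI[of _ "x*(1+x)/(2*(1-x))"]) auto
    qed
  next
    case False
    show ?thesis
    proof (rule DERIV_nonpos_imp_nonincreasing[of y 0])
      show "y \<le> 0" using False by simp
    next
      fix x assume "y \<le> x" "x \<le> 0"
      with assms have "\<bar>x\<bar> \<le> 1/2" by auto
      have "x*(1+x) \<le> 0" using \<open>x \<le> 0\<close> \<open>\<bar>x\<bar> \<le> 1/2\<close> by (simp add: mult_nonpos_nonneg)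
      moreover have "2*(1-x) > 0" using \<open>\<bar>x\<bar> \<le> 1/2\<close> by auto
      ultimately have "x*(1+x)/(2*(1-x)) \<le> 0" by (simp add: divide_nonpos_pos)
      with d[OF \<open>\<bar>x\<bar> \<le> 1/2\<close>] show "\<exists>z. DERIV f x :> z \<and> z \<le> 0" by blast
    qed
  qed
  thus ?thesis unfolding f_def by simp
qed

lemma pi_step:
  "t \<ge> 1 \<Longrightarrow> wsu_pi K \<eta> \<gamma> l I (Suc t) i = wsu_pi K \<eta> \<gamma> l I t i *
     (1 - \<eta> * (wsu_lhat K \<eta> \<gamma> l I t i - (\<Sum>j\<in>{1..K}. wsu_pi K \<eta> \<gamma> l I t j * wsu_lhat K \<eta> \<gamma> l I t j)))"
  by (simp add: wsu_lhat_def)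

lemma loss_bounds: "0 \<le> two_phase_loss T t i" "two_phase_loss T t i \<le> 1"
  by (auto simp: two_phase_loss_def)

lemma lhat_bounds:
  assumes "valid_params 2 \<eta> \<gamma>" "p 1 \<ge> 0" "p 2 \<ge> 0" "p 1 + p 2 = 1" "i \<in> {1,2}"
  shows "0 \<le> lhat_of 2 \<gamma> (two_phase_loss T) p t It i"
    "\<eta> * lhat_of 2 \<gamma> (two_phase_loss T) p t It i \<le> 1/2"
proof -
  from assms(1) have g: "0 < \<gamma>" "\<gamma> < 1/2" "0 < \<eta>" "\<eta> * 2 / \<gamma> \<le> 1/2"
    by (auto simp: valid_params_def)
  have pi: "0 \<le> p i" "p i \<le> 1" using assms(2-5) by auto
  define w where "w = wsu_tilde 2 \<gamma> p i"
  have w: "w \<ge> \<gamma>/2" unfolding w_def wsu_tilde_def using g pi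
    by (simp add: mult_nonneg_nonneg)
  have wp: "w > 0" using w g by linarith
  define c where "c = two_phase_loss T t i * (if It = i then 1 else 0)"
  have c: "0 \<le> c" "c \<le> 1" unfolding c_def using loss_bounds[of T t i] by auto
  have eq: "lhat_of 2 \<gamma> (two_phase_loss T) p t It i = c / w"
    unfolding lhat_of_def c_def w_def by simp
  show "0 \<le> lhat_of 2 \<gamma> (two_phase_loss T) p t It i" using eq c wp by simp
  have "c / w \<le> 1 / (\<gamma>/2)"
    using c w wp g by (intro frac_le) auto
  hence "\<eta> * (c/w) \<le> \<eta> * (2/\<gamma>)" using g by (intro mult_left_mono) auto
  also have "\<dots> \<le> 1/2" using g by simp
  finally show "\<eta> * lhat_of 2 \<gamma> (two_phase_loss T) p t It i \<le> 1/2" using eq by simp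
qed

lemma sum12: "(\<Sum>j\<in>{1..2::nat}. f j) = f 1 + (f 2 :: real)"
  by (simp add: numeral_2_eq_2)

lemma invariant:
  assumes v: "valid_params 2 \<eta> \<gamma>" and t: "t \<ge> 1"
  shows "wsu_pi 2 \<eta> \<gamma> (two_phase_loss T) I t 1 > 0 \<and> wsu_pi 2 \<eta> \<gamma> (two_phase_loss T) I t 2 > 0
     \<and> wsu_pi 2 \<eta> \<gamma> (two_phase_loss T) I t 1 + wsu_pi 2 \<eta> \<gamma> (two_phase_loss T) I t 2 = 1"
  using t
proof (induction t)
  case 0 then show ?case by simp
next
  case (Suc t)
  show ?case
  proof (cases "t = 0")
    case True then show ?thesis by simp
  next
    case False
    hence t1: "t \<ge> 1" by simp
    define p where "p = wsu_pi 2 \<eta> \<gamma> (two_phase_loss T) I t"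
    define lh where "lh = wsu_lhat 2 \<eta> \<gamma> (two_phase_loss T) I t"
    have IH: "p 1 > 0" "p 2 > 0" "p 1 + p 2 = 1" using Suc.IH[OF t1] unfolding p_def by auto
    have lb: "0 \<le> lh i" "\<eta> * lh i \<le> 1/2" if "i \<in> {1,2}" for i
      using lhat_bounds[OF v, of p i T t "I t"] IH that unfolding lh_def wsu_lhat_def p_def by auto
    have e: "\<eta> > 0" using v by (simp add: valid_params_def)
    define s where "s = p 1 * lh 1 + p 2 * lh 2"
    have s0: "s \<ge> 0" unfolding s_def using IH lb[of 1] lb[of 2] by simp
    have f: "1 - \<eta> * (lh i - s) \<ge> 1/2" if "i \<in> {1,2}" for i
      using lb[OF that] s0 e by (simp add: right_diff_distrib) (smt (verit) mult_nonneg_nonneg)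
    have st: "wsu_pi 2 \<eta> \<gamma> (two_phase_loss T) I (Suc t) i = p i * (1 - \<eta> * (lh i - s))" for i
      using pi_step[OF t1, of 2 \<eta> \<gamma> "two_phase_loss T" I i] unfolding p_def lh_def s_def
      by (simp only: sum12)
    have a: "p 1 * (1 - \<eta> * (lh 1 - s)) > 0" using IH f[of 1] by (simp add: mult_pos_pos)
    have b: "p 2 * (1 - \<eta> * (lh 2 - s)) > 0" using IH f[of 2] by (simp add: mult_pos_pos)
    have c: "p 1 * (1 - \<eta> * (lh 1 - s)) + p 2 * (1 - \<eta> * (lh 2 - s)) = 1"
    proof -
      have "p 1 * (1 - \<eta> * (lh 1 - s)) + p 2 * (1 - \<eta> * (lh 2 - s))
          = (p 1 + p 2) - \<eta> * s + \<eta> * s * (p 1 + p 2)"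
        unfolding s_def by (simp add: algebra_simps)
      thus ?thesis using IH by simp
    qed
    show ?thesis using a b c st by simp
  qed
qed

lemma det_bound:
  fixes T n :: nat and I :: "nat \<Rightarrow> nat"
  assumes v: "valid_params 2 \<eta> \<gamma>"
  defines "p \<equiv> wsu_pi 2 \<eta> \<gamma> (two_phase_loss T) I"
      and "lh \<equiv> wsu_lhat 2 \<eta> \<gamma> (two_phase_loss T) I"
  shows "(\<Sum>t=1..n. \<Sum>j\<in>{1..2}. p t j * lh t j) - (\<Sum>t=1..n. lh t 1)
        \<ge> (ln (p (n+1) 1) + ln (real 2)) / \<eta>
          + \<eta> / 4 * (\<Sum>t=1..n. (lh t 1 - (\<Sum>j\<in>{1..2}. p t j * lh t j))^2)"
proof -
  define x where "x t = lh t 1 - (\<Sum>j\<in>{1..2}. p t j * lh t j)" for t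
  have e: "\<eta> > 0" using v by (simp add: valid_params_def)
  have xb: "\<bar>\<eta> * x t\<bar> \<le> 1/2" if "t \<ge> 1" for t
  proof -
    have IH: "p t 1 > 0" "p t 2 > 0" "p t 1 + p t 2 = 1" using invariant[OF v that] unfolding p_def by auto
    have lb: "0 \<le> lh t i" "\<eta> * lh t i \<le> 1/2" if "i \<in> {1,2}" for i
      using lhat_bounds[OF v, of "p t" i T t "I t"] IH that unfolding lh_def wsu_lhat_def p_def by auto
    have p1: "p t 1 = 1 - p t 2" using IH(3) by simp
    have "x t = p t 2 * (lh t 1 - lh t 2)" unfolding x_def sum12 p1
      by (simp add: algebra_simps)
    hence xe: "\<eta> * x t = p t 2 * (\<eta> * lh t 1 - \<eta> * lh t 2)" by (simp only: right_diff_distrib mult.left_commute)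
    have n1: "\<eta> * lh t 1 \<ge> 0" "\<eta> * lh t 2 \<ge> 0" using lb(1)[of 1] lb(1)[of 2] e by auto
    have d: "\<bar>\<eta> * lh t 1 - \<eta> * lh t 2\<bar> \<le> 1/2"
      unfolding abs_le_iff using n1 lb(2)[of 1] lb(2)[of 2] by simp
    have "\<bar>\<eta> * x t\<bar> = p t 2 * \<bar>\<eta> * lh t 1 - \<eta> * lh t 2\<bar>"
      unfolding xe abs_mult using IH(2) by simp
    also have "\<dots> \<le> 1 * (1/2)"
      using d IH by (intro mult_mono) auto
    finally show ?thesis by simp
  qed
  have step: "p (Suc t) 1 = p t 1 * (1 - \<eta> * x t)" if "t \<ge> 1" for t
    using pi_step[OF that, of 2 \<eta> \<gamma> "two_phase_loss T" I 1] unfolding p_def lh_def x_def by simp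
  have lnsum: "ln (p (n+1) 1) = ln (1/2) + (\<Sum>t=1..n. ln (1 - \<eta> * x t))" for n
  proof (induction n)
    case 0 then show ?case by (simp add: p_def)
  next
    case (Suc n)
    have pos: "p (Suc n) 1 > 0" using invariant[OF v, of "Suc n"] unfolding p_def by auto
    have f: "1 - \<eta> * x (Suc n) > 0" using xb[of "Suc n"] by auto
    have "ln (p (Suc n + 1) 1) = ln (p (Suc n) 1) + ln (1 - \<eta> * x (Suc n))"
      using step[of "Suc n"] pos f by (simp add: ln_mult)
    then show ?case using Suc.IH by simp
  qed
  have "(\<Sum>t=1..n. ln (1 - \<eta> * x t)) \<le> (\<Sum>t=1..n. - (\<eta> * x t) - (\<eta> * x t)^2/4)"
    by (rule sum_mono) (rule ln_bound_aux, rule xb, simp)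
  also have "\<dots> = - \<eta> * (\<Sum>t=1..n. x t) - \<eta>^2/4 * (\<Sum>t=1..n. (x t)^2)"
    by (simp add: sum_subtractf sum_distrib_left power_mult_distrib sum_divide_distrib)
  finally have L: "ln (p (n+1) 1) + ln 2 \<le> - \<eta> * (\<Sum>t=1..n. x t) - \<eta>^2/4 * (\<Sum>t=1..n. (x t)^2)"
    using lnsum[of n] by (simp add: ln_div)
  have "(ln (p (n+1) 1) + ln (real 2)) / \<eta> \<le> (- \<eta> * (\<Sum>t=1..n. x t) - \<eta>^2/4 * (\<Sum>t=1..n. (x t)^2)) / \<eta>"
    using L e by (simp add: divide_right_mono)
  also have "\<dots> = - (\<Sum>t=1..n. x t) - \<eta>/4 * (\<Sum>t=1..n. (x t)^2)"
    using e by (simp add: field_simps power2_eq_square)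
  also have "- (\<Sum>t=1..n. x t) = (\<Sum>t=1..n. \<Sum>j\<in>{1..2}. p t j * lh t j) - (\<Sum>t=1..n. lh t 1)"
    unfolding x_def by (simp add: sum_subtractf)
  finally show ?thesis unfolding x_def by simp
qed

theorem mainTheorem8:
  fixes T :: nat and \<eta> \<gamma> :: real
  assumes "T \<ge> 1" and "100 dvd T" and "valid_params 2 \<eta> \<gamma>"
  shows "AE h in measure_pmf (wsu_hist 2 \<eta> \<gamma> (two_phase_loss T) T).
    (let I = hist_fun h;
         p = wsu_pi 2 \<eta> \<gamma> (two_phase_loss T) I;
         lh = wsu_lhat 2 \<eta> \<gamma> (two_phase_loss T) I
     in (\<Sum>t=1..T. \<Sum>j\<in>{1..2}. p t j * lh t j) - (\<Sum>t=1..T. lh t 1)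
        \<ge> (ln (p (T+1) 1) + ln (real 2)) / \<eta>
          + \<eta> / 4 * (\<Sum>t=1..T. (lh t 1 - (\<Sum>j\<in>{1..2}. p t j * lh t j))^2))"
  unfolding Let_def by (rule AE_I2) (rule det_bound[OF assms(3)])

end
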